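(* Let $\mathcal{T}=(X,A,Z,(f_n))$ be a mapping tuple, fix a compatible metric on $Z$, let $d\in\omega$ and $(u,(V_x)_{x\in X})\in U_{\mathcal{T}}$. Then there is a family $(W_x)_{x\in X}$ of subsets of $Z$ such that (a) $(u,(W_x)_{x\in X})\in E_{\mathcal{T}}$; (b) for each $x\in X$, $W_x\subseteq V_x$, $W_x$ is clopen and $\mathrm{diam}(W_x)\le 2^{-d}$; (c) $W_x\cap W_y=\emptyset$ for $x\ne y$ in $X$.
   Context: An oriented graph on $X$ is an irreflexive $A\subseteq X^2$ with $A\cap A^{-1}=\emptyset$; $s(A)=A\cup A^{-1}$; $\mathrm{Succ}(x)=\{y:(x,y)\in A\}$. $A$ is an uogas if it is an oriented graph, $|\mathrm{Succ}(x)|\le1$ for all $x$, and $s(A)$ is acyclic (no injective $s(A)$-path $(x_i)_{i\le n}$, $n\ge2$, with $(x_n,x_0)\in s(A)$). A strongly complex situation is $(Z,(f_n)_{n\in\omega})$ with $Z$ a nonempty zero-dimensional perfect Polish space, each $f_n$ a partial continuous open map on $Z$ with clopen domain $D_n$ and clopen range, $\Delta(Z)\subseteq\overline{\bigcup_n\mathrm{Graph}(f_n)}\setminus\bigcup_n\mathrm{Graph}(f_n)$, and the restriction of any $f_n$ to any nonempty open subset of $D_n$ not countable-to-one. A mapping tuple is $\mathcal{T}=(X,A,Z,(f_n))$ with $A$ an uogas on a finite set $X$ and $(Z,(f_n))$ a strongly complex situation. $E_{\mathcal{T}}$ (resp. $U_{\mathcal{T}}$) is the set of pairs $(u,(V_x)_{x\in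 X})$ with $u\in\omega^X$ and each $V_x$ a nonempty open subset of $Z$ such that for all $(x,y)\in A$: $V_x\subseteq D_{u(x)}$ and $V_y=f_{u(x)}[V_x]$ (resp. $V_y\subseteq f_{u(x)}[V_x]$). *)

theory Defs
  imports "HOL-Analysis.Analysis"
begin

definition symm_rel :: "('b \<times> 'b) set \<Rightarrow> ('b \<times> 'b) set" where
  "symm_rel A = A \<union> A\<inverse>"

definition oriented_graph :: "'b set \<Rightarrow> ('b \<times> 'b) set \<Rightarrow> bool" where
  "oriented_graph X A \<longleftrightarrow> A \<subseteq> X \<times> X \<and> (\<forall>x. (x, x) \<notin> A) \<and> A \<inter> A\<inverse> = {}"

definition Succ :: "('b \<times> 'b) set \<Rightarrow> 'b \<Rightarrow> 'b set" where
  "Succ A x = {y. (x, y) \<in> A}"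

definition s_acyclic :: "('b \<times> 'b) set \<Rightarrow> bool" where
  "s_acyclic A \<longleftrightarrow> \<not> (\<exists>(p :: nat \<Rightarrow> 'b) n. 2 \<le> n \<and> inj_on p {..n} \<and>
       (\<forall>i<n. (p i, p (Suc i)) \<in> symm_rel A) \<and> (p n, p 0) \<in> symm_rel A)"

definition uogas :: "'b set \<Rightarrow> ('b \<times> 'b) set \<Rightarrow> bool" where
  "uogas X A \<longleftrightarrow> oriented_graph X A \<and> (\<forall>x. card (Succ A x) \<le> 1 \<and> finite (Succ A x))
                 \<and> s_acyclic A"

definition clopenin :: "'a topology \<Rightarrow> 'a set \<Rightarrow> bool" where
  "clopenin T S \<longleftrightarrow> openin T S \<and> closedin T S"

definition pgraph :: "'a set \<Rightarrow> ('a \<Rightarrow> 'a) \<Rightarrow> ('a \<times> 'a) set" where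
  "pgraph D f = {(z, f z) | z. z \<in> D}"

text \<open>Strongly complex situation (Z,(f_n)) where f_n has domain D_n.  Z is a subset of a
  metric space type, with the subspace topology; the ambient metric restricted to Z
  is the fixed compatible metric.\<close>
definition strongly_complex_situation ::
    "'a::metric_space set \<Rightarrow> (nat \<Rightarrow> 'a set) \<Rightarrow> (nat \<Rightarrow> 'a \<Rightarrow> 'a) \<Rightarrow> bool" where
  "strongly_complex_situation Z D f \<longleftrightarrow>
     Z \<noteq> {} \<and>
     (top_of_set Z) dim_le 0 \<and>
     Z \<subseteq> (top_of_set Z) derived_set_of Z \<and>
     completely_metrizable_space (top_of_set Z) \<and> separable_space (top_of_set Z) \<and>
     (\<forall>n. clopenin (top_of_set Z) (D n) \<and>
          continuous_map (subtopology (top_of_set Z) (D n)) (top_of_set Z) (f n) \<and>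
          open_map (subtopology (top_of_set Z) (D n)) (top_of_set Z) (f n) \<and>
          clopenin (top_of_set Z) (f n ` D n)) \<and>
     (\<forall>z\<in>Z. (z, z) \<in> closure (\<Union>n. pgraph (D n) (f n)) \<and>
             (z, z) \<notin> (\<Union>n. pgraph (D n) (f n))) \<and>
     (\<forall>n V. openin (top_of_set Z) V \<and> V \<noteq> {} \<and> V \<subseteq> D n \<longrightarrow>
            \<not> (\<forall>w. countable ({z\<in>V. f n z = w})))"

definition mapping_tuple ::
    "'b set \<Rightarrow> ('b \<times> 'b) set \<Rightarrow> 'a::metric_space set \<Rightarrow> (nat \<Rightarrow> 'a set) \<Rightarrow> (nat \<Rightarrow> 'a \<Rightarrow> 'a) \<Rightarrow> bool" where
  "mapping_tuple X A Z D f \<longleftrightarrow> finite X \<and> uogas X A \<and> strongly_complex_situation Z D f"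

definition E_T ::
    "'b set \<Rightarrow> ('b \<times> 'b) set \<Rightarrow> 'a::metric_space set \<Rightarrow> (nat \<Rightarrow> 'a set) \<Rightarrow> (nat \<Rightarrow> 'a \<Rightarrow> 'a)
     \<Rightarrow> (('b \<Rightarrow> nat) \<times> ('b \<Rightarrow> 'a set)) set" where
  "E_T X A Z D f = {(u, V) | u V.
      (\<forall>x\<in>X. openin (top_of_set Z) (V x) \<and> V x \<noteq> {}) \<and>
      (\<forall>(x, y)\<in>A. V x \<subseteq> D (u x) \<and> V y = f (u x) ` V x)}"

definition U_T ::
    "'b set \<Rightarrow> ('b \<times> 'b) set \<Rightarrow> 'a::metric_space set \<Rightarrow> (nat \<Rightarrow> 'a set) \<Rightarrow> (nat \<Rightarrow> 'a \<Rightarrow> 'a)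
     \<Rightarrow> (('b \<Rightarrow> nat) \<times> ('b \<Rightarrow> 'a set)) set" where
  "U_T X A Z D f = {(u, V) | u V.
      (\<forall>x\<in>X. openin (top_of_set Z) (V x) \<and> V x \<noteq> {}) \<and>
      (\<forall>(x, y)\<in>A. V x \<subseteq> D (u x) \<and> V y \<subseteq> f (u x) ` V x)}"

end

theory Submission
  imports Defs
begin


definition functional_rel :: "('b \<times> 'b) set \<Rightarrow> bool" where
  "functional_rel A \<longleftrightarrow> (\<forall>x y y'. (x,y)\<in>A \<longrightarrow> (x,y')\<in>A \<longrightarrow> y = y')"

definition forest :: "'b set \<Rightarrow> ('b \<times> 'b) set \<Rightarrow> bool" where
  "forest X A \<longleftrightarrow> finite X \<and> A \<subseteq> X \<times> X \<and> functional_rel A \<and> (\<forall>x. (x,x) \<notin> A\<^sup>+)"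

definition nxt :: "('b \<times> 'b) set \<Rightarrow> 'b \<Rightarrow> 'b" where
  "nxt A x = (THE y. (x,y)\<in>A)"

definition ht :: "('b \<times> 'b) set \<Rightarrow> 'b \<Rightarrow> nat" where
  "ht A x = card {q. (x,q) \<in> A\<^sup>+}"

lemma nxt_eq: "functional_rel A \<Longrightarrow> (x,y)\<in>A \<Longrightarrow> nxt A x = y"
  unfolding nxt_def functional_rel_def by (rule the_equality) auto

lemma relpow_nxt: "functional_rel A \<Longrightarrow> (y,q) \<in> A ^^ k \<Longrightarrow> q = (nxt A ^^ k) y"
proof (induction k arbitrary: q)
  case 0 then show ?case by simp
next
  case (Suc k)
  then obtain p where "(y,p) \<in> A^^k" "(p,q)\<in>A" by auto
  then show ?case using Suc nxt_eq by fastforce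
qed

lemma functional_acyclic:
  assumes og: "oriented_graph X A" and fu: "functional_rel A" and sa: "s_acyclic A"
  shows "(x,x) \<notin> A\<^sup>+"
proof
  assume "(x,x) \<in> A\<^sup>+"
  then obtain k0 where k0: "0 < k0" "(x,x) \<in> A^^k0" using trancl_power by blast
  define k where "k = (LEAST k. 0 < k \<and> (x,x) \<in> A^^k)"
  have kk: "0 < k" "(x,x) \<in> A^^k" using LeastI[of "\<lambda>k. 0 < k \<and> (x,x) \<in> A^^k", OF conjI[OF k0]] k_def by auto
  have kmin: "\<And>j. 0 < j \<Longrightarrow> j < k \<Longrightarrow> (x,x) \<notin> A^^j"
    using k_def not_less_Least by blast
  define p where "p i = (nxt A ^^ i) x" for i
  have pi: "(x, p i) \<in> A^^i" if "i \<le> k" for i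
  proof -
    have "(x,x) \<in> A^^i O A^^(k-i)" using kk that by (simp add: relpow_add[symmetric])
    then obtain m where m1: "(x,m)\<in>A^^i" by blast
    have "m = p i" using relpow_nxt[OF fu m1] by (simp add: p_def)
    then show ?thesis using m1 by simp
  qed
  have pe: "(p i, p (Suc i)) \<in> A" if "i < k" for i
  proof -
    have "(x, p (Suc i)) \<in> A^^(Suc i)" using pi[of "Suc i"] that by (meson Suc_leI)
    then obtain m where m1: "(x,m)\<in>A^^i" and m2: "(m, p (Suc i)) \<in> A" by (meson relpow_Suc_E)
    have "m = p i" using relpow_nxt[OF fu m1] by (simp add: p_def)
    then show ?thesis using m2 by simp
  qed
  have pk: "p k = x" using relpow_nxt[OF fu kk(2)] p_def by simp
  have pinj: "p i \<noteq> p j" if "i < j" "j < k" for i j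
  proof
    assume "p i = p j"
    have "(p j, x) \<in> A^^(k-j)"
    proof -
      have "(x,x) \<in> A^^j O A^^(k-j)" using kk that by (simp add: relpow_add[symmetric])
      then obtain m where m1: "(x,m)\<in>A^^j" and m2: "(m,x)\<in>A^^(k-j)" by blast
      have "m = p j" using relpow_nxt[OF fu m1] by (simp add: p_def)
      then show ?thesis using m2 by simp
    qed
    note pj = this
    have "i \<le> k" using that by simp
    then have "(x, p i) \<in> A^^i" by (rule pi)
    then have "(x, p j) \<in> A^^i" using \<open>p i = p j\<close> by simp
    then have "(x,x) \<in> A^^i O A^^(k-j)" using pj by (rule relcompI)
    then have "(x,x) \<in> A^^(i + (k-j))" by (simp only: relpow_add)
    moreover have "0 < i + (k-j)" using that by linarith
    moreover have "i + (k-j) < k" using that by linarith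
    ultimately show False using kmin[of "i + (k-j)"] by simp
  qed
  have p0: "p 0 = x" by (simp add: p_def)
  have "k \<noteq> 1" using pe[of 0] pk p0 og unfolding oriented_graph_def by auto
  moreover have "k \<noteq> 2" using pe[of 0] pe[of 1] pk p0 og unfolding oriented_graph_def
    by (auto simp: numeral_2_eq_2)
  ultimately have "k \<ge> 3" using kk by linarith
  have inj: "inj_on p {..k-1}"
  proof (rule inj_onI)
    fix i j assume "i \<in> {..k-1}" "j \<in> {..k-1}" "p i = p j"
    then have "i \<le> k - 1" "j \<le> k - 1" by auto
    then have "i < k" "j < k" using kk(1) by auto
    show "i = j"
    proof (rule ccontr)
      assume "i \<noteq> j"
      then have "i < j \<or> j < i" by linarith
      then show False using pinj[of i j] pinj[of j i] \<open>p i = p j\<close> \<open>i < k\<close> \<open>j < k\<close> by auto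
    qed
  qed
  have e1: "\<forall>i<k-1. (p i, p (Suc i)) \<in> symm_rel A"
    using pe unfolding symm_rel_def by auto
  have e2: "(p (k-1), p 0) \<in> symm_rel A"
  proof -
    have "(p (k-1), p (Suc (k-1))) \<in> A" using pe[of "k-1"] kk(1) by simp
    then show ?thesis using pk kk(1) unfolding symm_rel_def by (simp add: p_def)
  qed
  have "2 \<le> k - 1" using \<open>k \<ge> 3\<close> by simp
  then have "2 \<le> k - 1 \<and> inj_on p {..k-1} \<and> (\<forall>i<k-1. (p i, p (Suc i)) \<in> symm_rel A)
     \<and> (p (k-1), p 0) \<in> symm_rel A" using inj e1 e2 by simp
  moreover have "\<not> (2 \<le> k - 1 \<and> inj_on p {..k-1} \<and> (\<forall>i<k-1. (p i, p (Suc i)) \<in> symm_rel A)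
     \<and> (p (k-1), p 0) \<in> symm_rel A)"
    using sa unfolding s_acyclic_def not_ex by (erule_tac x=p in allE, erule_tac x="k-1" in allE)
  ultimately show False by blast
qed

lemma uogas_forest: "finite X \<Longrightarrow> uogas X A \<Longrightarrow> forest X A"
proof -
  assume fX: "finite X" and u: "uogas X A"
  have fu: "functional_rel A"
    unfolding functional_rel_def
  proof (intro allI impI)
    fix x y y' assume "(x,y)\<in>A" "(x,y')\<in>A"
    then have "y \<in> Succ A x" "y' \<in> Succ A x" by (auto simp: Succ_def)
    moreover have "card (Succ A x) \<le> 1" "finite (Succ A x)" using u by (auto simp: uogas_def)
    ultimately show "y = y'" by (metis One_nat_def card_le_Suc0_iff_eq)
  qed
  have og: "oriented_graph X A" and sa: "s_acyclic A" using u by (auto simp: uogas_def)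
  have "\<forall>x. (x,x) \<notin> A\<^sup>+" using functional_acyclic[OF og fu sa] by blast
  moreover have "A \<subseteq> X \<times> X" using og by (simp add: oriented_graph_def)
  ultimately show ?thesis using fX fu unfolding forest_def by blast
qed



lemma forest_trancl_edge:
  assumes "forest X A" "(x,y) \<in> A"
  shows "{q. (x,q) \<in> A\<^sup>+} = insert y {q. (y,q) \<in> A\<^sup>+}"
proof -
  have fu: "functional_rel A" using assms(1) by (simp add: forest_def)
  have "q = y \<or> (y,q) \<in> A\<^sup>+" if "(x,q) \<in> A\<^sup>+" for q
    using that
  proof (rule converse_tranclE)
    assume "(x,q) \<in> A" then show ?thesis using fu assms(2) unfolding functional_rel_def by blast
  next
    fix c assume c: "(x,c) \<in> A" "(c,q) \<in> A\<^sup>+"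
    then have "c = y" using fu assms(2) unfolding functional_rel_def by blast
    then show ?thesis using c by simp
  qed
  moreover have "(x,q) \<in> A\<^sup>+" if "q = y \<or> (y,q) \<in> A\<^sup>+" for q
    using that assms(2) by auto
  ultimately show ?thesis by blast
qed

lemma forest_anc_finite:
  assumes "forest X A" shows "finite {q. (x,q) \<in> A\<^sup>+}"
proof -
  have "A\<^sup>+ \<subseteq> X \<times> X" using assms trancl_subset_Sigma unfolding forest_def by blast
  then have "{q. (x,q) \<in> A\<^sup>+} \<subseteq> X" by blast
  then show ?thesis using assms finite_subset unfolding forest_def by blast
qed

lemma ht_edge:
  assumes "forest X A" "(x,y) \<in> A"
  shows "ht A x = Suc (ht A y)"
proof -
  have "y \<notin> {q. (y,q) \<in> A\<^sup>+}" using assms(1) by (simp add: forest_def)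
  then show ?thesis unfolding ht_def forest_trancl_edge[OF assms]
    using forest_anc_finite[OF assms(1)] by simp
qed

lemma ht_root:
  assumes "\<forall>y. (x,y) \<notin> A"
  shows "ht A x = 0"
proof -
  have "{q. (x,q) \<in> A\<^sup>+} = {}" using assms by (auto elim: converse_tranclE)
  then show ?thesis by (simp add: ht_def)
qed

lemma ht_pos_edge:
  assumes "0 < ht A x" shows "\<exists>y. (x,y) \<in> A"
  using ht_root assms by fastforce

lemma ht_less:
  assumes "forest X A" "x \<in> X" shows "ht A x < card X"
proof -
  have "A\<^sup>+ \<subseteq> X \<times> X" using assms trancl_subset_Sigma unfolding forest_def by blast
  then have "{q. (x,q) \<in> A\<^sup>+} \<subseteq> X - {x}" using assms(1) unfolding forest_def by blast
  then have "ht A x \<le> card (X - {x})" unfolding ht_def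
    using assms(1) card_mono unfolding forest_def by (metis finite_Diff)
  also have "\<dots> < card X" using assms unfolding forest_def
    by (meson card_Diff1_less)
  finally show ?thesis .
qed

lemma ht_induct:
  assumes fo: "forest X A"
    and base: "\<And>x. x \<in> X \<Longrightarrow> \<forall>y. (x,y) \<notin> A \<Longrightarrow> P x"
    and step: "\<And>x y. (x,y) \<in> A \<Longrightarrow> P y \<Longrightarrow> P x"
    and x: "x \<in> X"
  shows "P x"
proof -
  have AX: "A \<subseteq> X \<times> X" using fo by (simp add: forest_def)
  have "\<forall>x\<in>X. ht A x = k \<longrightarrow> P x" for k
  proof (induction k)
    case 0
    then show ?case using base ht_edge[OF fo] by fastforce
  next
    case (Suc k)
    show ?case
    proof (intro ballI impI)
      fix x assume "x \<in> X" "ht A x = Suc k"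
      then obtain y where y: "(x,y) \<in> A" using ht_pos_edge[of A x] by auto
      then have "ht A y = k" "y \<in> X" using ht_edge[OF fo y] \<open>ht A x = Suc k\<close> AX by auto
      then show "P x" using Suc step y by blast
    qed
  qed
  then show ?thesis using x by blast
qed

fun Tk :: "('b \<times> 'b) set \<Rightarrow> (nat \<Rightarrow> 'a \<Rightarrow> 'a) \<Rightarrow> ('b \<Rightarrow> nat) \<Rightarrow> ('b \<Rightarrow> 'a set) \<Rightarrow> nat \<Rightarrow> 'b \<Rightarrow> 'a set"
  where
  "Tk A f u Ob 0 x = Ob x"
| "Tk A f u Ob (Suc k) x = {a \<in> Ob x. f (u x) a \<in> Tk A f u Ob k (nxt A x)}"

definition Tc :: "('b \<times> 'b) set \<Rightarrow> (nat \<Rightarrow> 'a \<Rightarrow> 'a) \<Rightarrow> ('b \<Rightarrow> nat) \<Rightarrow> ('b \<Rightarrow> 'a set) \<Rightarrow> 'b \<Rightarrow> 'a set"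
  where "Tc A f u Ob x = Tk A f u Ob (ht A x) x"

lemma Tc_edge:
  assumes "forest X A" "(x,y) \<in> A"
  shows "Tc A f u Ob x = {a \<in> Ob x. f (u x) a \<in> Tc A f u Ob y}"
  using ht_edge[OF assms] nxt_eq[of A x y] assms unfolding Tc_def forest_def by simp

lemma Tc_root:
  assumes "\<forall>y. (x,y) \<notin> A" shows "Tc A f u Ob x = Ob x"
  using ht_root[OF assms] unfolding Tc_def by simp

lemma Tk_sub: "Tk A f u Ob k x \<subseteq> Ob x"
  by (cases k) auto

lemma Tc_sub: "Tc A f u Ob x \<subseteq> Ob x"
  unfolding Tc_def by (rule Tk_sub)



definition sit :: "'a::metric_space set \<Rightarrow> (nat \<Rightarrow> 'a set) \<Rightarrow> (nat \<Rightarrow> 'a \<Rightarrow> 'a) \<Rightarrow> bool" where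
 "sit Z D f \<longleftrightarrow> (\<forall>n. openin (top_of_set Z) (D n) \<and> closedin (top_of_set Z) (D n) \<and>
      continuous_map (subtopology (top_of_set Z) (D n)) (top_of_set Z) (f n) \<and>
      open_map (subtopology (top_of_set Z) (D n)) (top_of_set Z) (f n)) \<and>
   (\<forall>n V. openin (top_of_set Z) V \<and> V \<noteq> {} \<and> V \<subseteq> D n \<longrightarrow> \<not>(\<forall>w. countable {z\<in>V. f n z = w})) \<and>
   (\<forall>S. openin (top_of_set Z) S \<and> S \<noteq> {} \<longrightarrow> infinite S)"

lemma sit_D: assumes "sit Z D f"
  shows "openin (top_of_set Z) (D n)" "closedin (top_of_set Z) (D n)"
    "continuous_map (subtopology (top_of_set Z) (D n)) (top_of_set Z) (f n)"
    "open_map (subtopology (top_of_set Z) (D n)) (top_of_set Z) (f n)"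
proof -
  have "\<forall>n. openin (top_of_set Z) (D n) \<and> closedin (top_of_set Z) (D n) \<and>
      continuous_map (subtopology (top_of_set Z) (D n)) (top_of_set Z) (f n) \<and>
      open_map (subtopology (top_of_set Z) (D n)) (top_of_set Z) (f n)"
    using assms unfolding sit_def by (rule conjunct1)
  then show "openin (top_of_set Z) (D n)" "closedin (top_of_set Z) (D n)"
    "continuous_map (subtopology (top_of_set Z) (D n)) (top_of_set Z) (f n)"
    "open_map (subtopology (top_of_set Z) (D n)) (top_of_set Z) (f n)" by blast+
qed

lemma sit_nc: assumes "sit Z D f" "openin (top_of_set Z) V" "V \<noteq> {}" "V \<subseteq> D n"
  shows "\<exists>w. \<not> countable {z\<in>V. f n z = w}"
proof -
  have "\<forall>n V. openin (top_of_set Z) V \<and> V \<noteq> {} \<and> V \<subseteq> D n \<longrightarrow> \<not>(\<forall>w. countable {z\<in>V. f n z = w})"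
    using assms(1) unfolding sit_def by (meson conjunct1 conjunct2)
  then show ?thesis using assms(2-4) by blast
qed

lemma sit_inf: assumes "sit Z D f" "openin (top_of_set Z) S" "S \<noteq> {}"
  shows "infinite S"
proof -
  have "\<forall>S. openin (top_of_set Z) S \<and> S \<noteq> {} \<longrightarrow> infinite S"
    using assms(1) unfolding sit_def by (meson conjunct2)
  then show ?thesis using assms(2-3) by blast
qed

lemma sit_D_sub: "sit Z D f \<Longrightarrow> D n \<subseteq> Z"
  proof -
  assume "sit Z D f"
  then have "openin (top_of_set Z) (D n)" by (rule sit_D)
  from openin_subset[OF this] show ?thesis by simp
qed

lemma sit_pre_open:
  assumes "sit Z D f" "openin (top_of_set Z) W"
  shows "openin (top_of_set Z) {a \<in> D n. f n a \<in> W}"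
proof -
  have c: "continuous_map (subtopology (top_of_set Z) (D n)) (top_of_set Z) (f n)"
    by (rule sit_D(3)[OF assms(1)])
  have o: "openin (top_of_set Z) (D n)" by (rule sit_D(1)[OF assms(1)])
  have ts: "topspace (subtopology (top_of_set Z) (D n)) = D n"
    using sit_D_sub[OF assms(1)] by (simp add: inf.absorb2)
  have "openin (subtopology (top_of_set Z) (D n)) {a \<in> D n. f n a \<in> W}"
    using openin_continuous_map_preimage[OF c assms(2)] unfolding ts .
  then show ?thesis using o by (rule openin_trans_full)
qed

lemma sit_pre_closed:
  assumes "sit Z D f" "closedin (top_of_set Z) W"
  shows "closedin (top_of_set Z) {a \<in> D n. f n a \<in> W}"
proof -
  have c: "continuous_map (subtopology (top_of_set Z) (D n)) (top_of_set Z) (f n)"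
    by (rule sit_D(3)[OF assms(1)])
  have o: "closedin (top_of_set Z) (D n)" by (rule sit_D(2)[OF assms(1)])
  have ts: "topspace (subtopology (top_of_set Z) (D n)) = D n"
    using sit_D_sub[OF assms(1)] by (simp add: inf.absorb2)
  have "closedin (subtopology (top_of_set Z) (D n)) {a \<in> D n. f n a \<in> W}"
    using closedin_continuous_map_preimage[OF c assms(2)] unfolding ts .
  then show ?thesis using o by (rule closedin_trans_full)
qed

lemma sit_img_open:
  assumes "sit Z D f" "openin (top_of_set Z) S" "S \<subseteq> D n"
  shows "openin (top_of_set Z) (f n ` S)"
proof -
  have om: "open_map (subtopology (top_of_set Z) (D n)) (top_of_set Z) (f n)"
    by (rule sit_D(4)[OF assms(1)])
  have e: "S = S \<inter> D n" using assms(3) by blast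
  have "openin (subtopology (top_of_set Z) (D n)) (S \<inter> D n)"
    by (rule openin_subtopology_Int[OF assms(2)])
  then have "openin (subtopology (top_of_set Z) (D n)) S" using e by simp
  then show ?thesis using om[unfolded open_map_def, rule_format] by blast
qed

definition Ufam where
  "Ufam X A Z D f u V \<longleftrightarrow> (\<forall>x\<in>X. openin (top_of_set Z) (V x) \<and> V x \<noteq> {}) \<and>
      (\<forall>(x, y)\<in>A. V x \<subseteq> D (u x) \<and> V y \<subseteq> f (u x) ` V x)"

definition thread where
  "thread X A f u V z \<longleftrightarrow> (\<forall>x\<in>X. z x \<in> V x) \<and> (\<forall>(x,y)\<in>A. f (u x) (z x) = z y)"

context
  fixes X :: "'b set" and A :: "('b \<times> 'b) set" and Z :: "'a::metric_space set"
    and D :: "nat \<Rightarrow> 'a set" and f :: "nat \<Rightarrow> 'a \<Rightarrow> 'a" and u :: "'b \<Rightarrow> nat" and Ob :: "'b \<Rightarrow> 'a set"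
  assumes fo: "forest X A"
    and HO: "\<And>x y. (x,y)\<in>A \<Longrightarrow> Ob x \<subseteq> D (u x) \<and> Ob y \<subseteq> f (u x) ` Ob x"
begin

lemma Tc_E:
  assumes "(x,y)\<in>A"
  shows "Tc A f u Ob x \<subseteq> D (u x) \<and> Tc A f u Ob y = f (u x) ` Tc A f u Ob x"
proof -
  have e0: "Tc A f u Ob x = {a \<in> Ob x. f (u x) a \<in> Tc A f u Ob y}"
    by (rule Tc_edge[OF fo assms])
  have e: "a \<in> Tc A f u Ob x \<longleftrightarrow> a \<in> Ob x \<and> f (u x) a \<in> Tc A f u Ob y" for a
    by (subst e0) (rule mem_Collect_eq)
  have h: "Ob x \<subseteq> D (u x) \<and> Ob y \<subseteq> f (u x) ` Ob x" by (rule HO[OF assms])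
  have h1: "Ob x \<subseteq> D (u x)" using h by (rule conjunct1)
  have h2: "Ob y \<subseteq> f (u x) ` Ob x" using h by (rule conjunct2)
  have s1: "Tc A f u Ob y \<subseteq> f (u x) ` Tc A f u Ob x"
  proof
    fix b assume b: "b \<in> Tc A f u Ob y"
    have "b \<in> Ob y" using b Tc_sub[of A f u Ob y] by (rule subsetD[rotated])
    then have "b \<in> f (u x) ` Ob x" using h2 by (rule subsetD[rotated])
    then obtain a where a1: "a \<in> Ob x" and a2: "b = f (u x) a" by (rule imageE)
    have "f (u x) a \<in> Tc A f u Ob y" using b a2 by (simp only:)
    then have "a \<in> Tc A f u Ob x" using a1 e by blast
    then show "b \<in> f (u x) ` Tc A f u Ob x" using a2 by (rule rev_image_eqI)
  qed
  have s2: "f (u x) ` Tc A f u Ob x \<subseteq> Tc A f u Ob y"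
  proof
    fix b assume "b \<in> f (u x) ` Tc A f u Ob x"
    then obtain a where a1: "a \<in> Tc A f u Ob x" and a2: "b = f (u x) a" by (rule imageE)
    have "f (u x) a \<in> Tc A f u Ob y" using a1 e by blast
    then show "b \<in> Tc A f u Ob y" using a2 by (simp only:)
  qed
  have "Tc A f u Ob x \<subseteq> D (u x)" using Tc_sub[of A f u Ob x] h1 by (rule order_trans)
  moreover have "Tc A f u Ob y = f (u x) ` Tc A f u Ob x" using s1 s2 by (rule subset_antisym)
  ultimately show ?thesis by (rule conjI)
qed

lemma Tc_ne:
  assumes "\<And>x. x\<in>X \<Longrightarrow> Ob x \<noteq> {}" "x \<in> X"
  shows "Tc A f u Ob x \<noteq> {}"
  using fo _ _ assms(2)
proof (rule ht_induct)
  fix x assume x: "x \<in> X" and r: "\<forall>y. (x,y) \<notin> A"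
  have "Tc A f u Ob x = Ob x" using r by (rule Tc_root)
  then show "Tc A f u Ob x \<noteq> {}" using assms(1)[OF x] by simp
next
  fix x y assume xy: "(x,y) \<in> A" and ne: "Tc A f u Ob y \<noteq> {}"
  have "Tc A f u Ob y = f (u x) ` Tc A f u Ob x" using Tc_E[OF xy] by (rule conjunct2)
  then show "Tc A f u Ob x \<noteq> {}" using ne by force
qed

lemma Tc_open:
  assumes "sit Z D f" "\<And>x. x\<in>X \<Longrightarrow> openin (top_of_set Z) (Ob x)" "x \<in> X"
  shows "openin (top_of_set Z) (Tc A f u Ob x)"
  using fo _ _ assms(3)
proof (rule ht_induct)
  fix x assume x: "x \<in> X" and r: "\<forall>y. (x,y) \<notin> A"
  have "Tc A f u Ob x = Ob x" using r by (rule Tc_root)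
  then show "openin (top_of_set Z) (Tc A f u Ob x)" using assms(2)[OF x] by simp
next
  fix x y assume xy: "(x,y) \<in> A" and oy: "openin (top_of_set Z) (Tc A f u Ob y)"
  have p: "openin (top_of_set Z) {a \<in> D (u x). f (u x) a \<in> Tc A f u Ob y}"
    by (rule sit_pre_open[OF assms(1) oy])
  have x: "x \<in> X" using xy fo unfolding forest_def by blast
  have e: "Tc A f u Ob x = Ob x \<inter> {a \<in> D (u x). f (u x) a \<in> Tc A f u Ob y}"
    using Tc_edge[OF fo xy, where f=f and u=u and Ob=Ob] HO[OF xy] by blast
  have "openin (top_of_set Z) (Ob x \<inter> {a \<in> D (u x). f (u x) a \<in> Tc A f u Ob y})"
    by (rule openin_Int[OF assms(2)[OF x] p])
  then show "openin (top_of_set Z) (Tc A f u Ob x)" unfolding e .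
qed

lemma Tc_closed:
  assumes "sit Z D f" "\<And>x. x\<in>X \<Longrightarrow> closedin (top_of_set Z) (Ob x)" "x \<in> X"
  shows "closedin (top_of_set Z) (Tc A f u Ob x)"
  using fo _ _ assms(3)
proof (rule ht_induct)
  fix x assume x: "x \<in> X" and r: "\<forall>y. (x,y) \<notin> A"
  have "Tc A f u Ob x = Ob x" using r by (rule Tc_root)
  then show "closedin (top_of_set Z) (Tc A f u Ob x)" using assms(2)[OF x] by simp
next
  fix x y assume xy: "(x,y) \<in> A" and oy: "closedin (top_of_set Z) (Tc A f u Ob y)"
  have p: "closedin (top_of_set Z) {a \<in> D (u x). f (u x) a \<in> Tc A f u Ob y}"
    by (rule sit_pre_closed[OF assms(1) oy])
  have x: "x \<in> X" using xy fo unfolding forest_def by blast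
  have e: "Tc A f u Ob x = Ob x \<inter> {a \<in> D (u x). f (u x) a \<in> Tc A f u Ob y}"
    using Tc_edge[OF fo xy, where f=f and u=u and Ob=Ob] HO[OF xy] by blast
  have "closedin (top_of_set Z) (Ob x \<inter> {a \<in> D (u x). f (u x) a \<in> Tc A f u Ob y})"
    by (rule closedin_Int[OF assms(2)[OF x] p])
  then show "closedin (top_of_set Z) (Tc A f u Ob x)" unfolding e .
qed

lemma Tc_thread:
  assumes "thread X A f u Ob z" "x \<in> X"
  shows "z x \<in> Tc A f u Ob x"
  using fo _ _ assms(2)
proof (rule ht_induct)
  fix x assume x: "x \<in> X" and r: "\<forall>y. (x,y) \<notin> A"
  have "Tc A f u Ob x = Ob x" using r by (rule Tc_root)
  moreover have "z x \<in> Ob x" using assms(1) x unfolding thread_def by blast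
  ultimately show "z x \<in> Tc A f u Ob x" by simp
next
  fix x y assume xy: "(x,y) \<in> A" and zy: "z y \<in> Tc A f u Ob y"
  have x: "x \<in> X" using xy fo unfolding forest_def by blast
  have "z x \<in> Ob x" "f (u x) (z x) = z y" using assms(1) x xy unfolding thread_def by blast+
  then show "z x \<in> Tc A f u Ob x" using Tc_edge[OF fo xy, where f=f and u=u and Ob=Ob] zy by simp
qed

end



lemma relpow_ht:
  assumes fo: "forest X A" and "(y,q) \<in> A ^^ k"
  shows "ht A y = ht A q + k"
  using assms(2)
proof (induction k arbitrary: q)
  case 0 then show ?case by simp
next
  case (Suc k)
  from Suc.prems obtain p where p1: "(y,p) \<in> A^^k" and p2: "(p,q)\<in>A" by (rule relpow_Suc_E)
  have "ht A p = Suc (ht A q)" by (rule ht_edge[OF fo p2])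
  moreover have "ht A y = ht A p + k" by (rule Suc.IH[OF p1])
  ultimately show ?case by simp
qed

lemma chain_path:
  assumes fo: "forest X A" and "k \<le> ht A y"
  shows "(y, (nxt A ^^ k) y) \<in> A ^^ k"
  using assms(2)
proof (induction k)
  case 0 then show ?case by simp
next
  case (Suc k)
  have fu: "functional_rel A" using fo unfolding forest_def by blast
  have kk: "k \<le> ht A y" using Suc.prems by linarith
  have p: "(y, (nxt A ^^ k) y) \<in> A ^^ k" by (rule Suc.IH[OF kk])
  have "ht A y = ht A ((nxt A ^^ k) y) + k" by (rule relpow_ht[OF fo p])
  then have "0 < ht A ((nxt A ^^ k) y)" using Suc.prems by linarith
  then have "\<exists>z. ((nxt A ^^ k) y, z) \<in> A" by (rule ht_pos_edge)
  then obtain z where z: "((nxt A ^^ k) y, z) \<in> A" by (elim exE)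
  have "nxt A ((nxt A ^^ k) y) = z" by (rule nxt_eq[OF fu z])
  then have e: "(nxt A ^^ Suc k) y = z" by simp
  have "(y, z) \<in> A ^^ Suc k" using p z by (rule relpow_Suc_I)
  then show ?case unfolding e .
qed

fun Ch :: "('b \<times> 'b) set \<Rightarrow> (nat \<Rightarrow> 'a \<Rightarrow> 'a) \<Rightarrow> ('b \<Rightarrow> nat) \<Rightarrow> 'b \<Rightarrow> 'a set \<Rightarrow> nat \<Rightarrow> 'a set" where
  "Ch A f u y S 0 = S"
| "Ch A f u y S (Suc k) = f (u ((nxt A ^^ k) y)) ` Ch A f u y S k"


lemma Ufam_HO:
  assumes "Ufam X A Z D f u V" "(x,y) \<in> A"
  shows "V x \<subseteq> D (u x) \<and> V y \<subseteq> f (u x) ` V x"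
  using assms unfolding Ufam_def by blast

lemma Ufam_open:
  assumes "Ufam X A Z D f u V" "x \<in> X"
  shows "openin (top_of_set Z) (V x)" "V x \<noteq> {}"
  using assms unfolding Ufam_def by blast+

lemma forest_edge_X:
  assumes "forest X A" "(x,y) \<in> A" shows "x \<in> X" "y \<in> X"
  using assms unfolding forest_def by blast+

lemma chain_X:
  assumes fo: "forest X A" and y: "y \<in> X" and k: "k \<le> ht A y"
  shows "(nxt A ^^ k) y \<in> X"
proof (cases k)
  case 0 then show ?thesis using y by simp
next
  case (Suc j)
  have "(y, (nxt A ^^ k) y) \<in> A ^^ Suc j" using chain_path[OF fo k] Suc by simp
  then obtain p where "(p, (nxt A ^^ k) y) \<in> A" by (elim relpow_Suc_E)
  then show ?thesis by (rule forest_edge_X(2)[OF fo])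
qed

lemma chain_edge:
  assumes fo: "forest X A" and k: "k < ht A y"
  shows "((nxt A ^^ k) y, (nxt A ^^ Suc k) y) \<in> A"
proof -
  have fu: "functional_rel A" using fo unfolding forest_def by blast
  have k1: "Suc k \<le> ht A y" using k by linarith
  have "(y, (nxt A ^^ Suc k) y) \<in> A ^^ Suc k" by (rule chain_path[OF fo k1])
  then obtain p where p1: "(y,p) \<in> A ^^ k" and p2: "(p, (nxt A ^^ Suc k) y) \<in> A"
    by (rule relpow_Suc_E)
  have "p = (nxt A ^^ k) y" by (rule relpow_nxt[OF fu p1])
  then show ?thesis using p2 by (simp only:)
qed

context
  fixes X :: "'b set" and A :: "('b \<times> 'b) set" and Z :: "'a::metric_space set"
    and D :: "nat \<Rightarrow> 'a set" and f :: "nat \<Rightarrow> 'a \<Rightarrow> 'a" and u :: "'b \<Rightarrow> nat" and V :: "'b \<Rightarrow> 'a set"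
    and y :: 'b and S :: "'a set"
  assumes fo: "forest X A" and si: "sit Z D f" and Uf: "Ufam X A Z D f u V"
    and yX: "y \<in> X" and So: "openin (top_of_set Z) S" and Sne: "S \<noteq> {}"
    and SG: "S \<subseteq> Tc A f u V y"
begin

lemma HOV: "(x,y') \<in> A \<Longrightarrow> V x \<subseteq> D (u x) \<and> V y' \<subseteq> f (u x) ` V x"
  by (rule Ufam_HO[OF Uf])

lemma Ch_props:
  assumes "k \<le> ht A y"
  shows "Ch A f u y S k \<subseteq> Tc A f u V ((nxt A ^^ k) y) \<and> openin (top_of_set Z) (Ch A f u y S k)
     \<and> Ch A f u y S k \<noteq> {}"
  using assms
proof (induction k)
  case 0 then show ?case using SG So Sne by simp
next
  case (Suc k)
  have kk: "k \<le> ht A y" using Suc.prems by linarith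
  have IH: "Ch A f u y S k \<subseteq> Tc A f u V ((nxt A ^^ k) y)" "openin (top_of_set Z) (Ch A f u y S k)"
     "Ch A f u y S k \<noteq> {}" using Suc.IH[OF kk] by blast+
  have ed: "((nxt A ^^ k) y, (nxt A ^^ Suc k) y) \<in> A" by (rule chain_edge[OF fo]) (use Suc.prems in linarith)
  have E: "Tc A f u V ((nxt A ^^ k) y) \<subseteq> D (u ((nxt A ^^ k) y)) \<and>
     Tc A f u V ((nxt A ^^ Suc k) y) = f (u ((nxt A ^^ k) y)) ` Tc A f u V ((nxt A ^^ k) y)"
    by (rule Tc_E[where X=X and A=A and D=D and f=f and u=u and Ob=V, OF fo HOV ed])
  have e: "Ch A f u y S (Suc k) = f (u ((nxt A ^^ k) y)) ` Ch A f u y S k" by simp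
  have s1: "Ch A f u y S (Suc k) \<subseteq> Tc A f u V ((nxt A ^^ Suc k) y)"
    unfolding e using E IH(1) by (metis image_mono)
  have sD: "Ch A f u y S k \<subseteq> D (u ((nxt A ^^ k) y))" using IH(1) E by (meson order_trans)
  have s2: "openin (top_of_set Z) (Ch A f u y S (Suc k))"
    unfolding e by (rule sit_img_open[OF si IH(2) sD])
  have s3: "Ch A f u y S (Suc k) \<noteq> {}" unfolding e using IH(3) by simp
  show ?case using s1 s2 s3 by (intro conjI)
qed

definition V' :: "'b \<Rightarrow> 'a set" where
  "V' q = (if (y,q) \<in> A\<^sup>* then Ch A f u y S (ht A y - ht A q) else Tc A f u V q)"

lemma anc:
  assumes "(y,q) \<in> A\<^sup>*"
  shows "ht A y - ht A q \<le> ht A y \<and> q = (nxt A ^^ (ht A y - ht A q)) y"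
proof -
  have fu: "functional_rel A" using fo unfolding forest_def by blast
  obtain j where j: "(y,q) \<in> A ^^ j" using assms rtrancl_power by blast
  have h: "ht A y = ht A q + j" by (rule relpow_ht[OF fo j])
  have "q = (nxt A ^^ j) y" by (rule relpow_nxt[OF fu j])
  moreover have "ht A y - ht A q = j" using h by linarith
  ultimately show ?thesis by simp
qed

lemma V'_props:
  assumes "q \<in> X"
  shows "V' q \<subseteq> Tc A f u V q \<and> openin (top_of_set Z) (V' q) \<and> V' q \<noteq> {}"
proof (cases "(y,q) \<in> A\<^sup>*")
  case True
  have a: "ht A y - ht A q \<le> ht A y" "q = (nxt A ^^ (ht A y - ht A q)) y"
    using anc[OF True] by blast+
  have c: "Ch A f u y S (ht A y - ht A q) \<subseteq> Tc A f u V q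
     \<and> openin (top_of_set Z) (Ch A f u y S (ht A y - ht A q)) \<and> Ch A f u y S (ht A y - ht A q) \<noteq> {}"
    using Ch_props[OF a(1)] unfolding a(2)[symmetric] .
  have "V' q = Ch A f u y S (ht A y - ht A q)" unfolding V'_def using True by simp
  then show ?thesis using c by simp
next
  case False
  have o: "openin (top_of_set Z) (Tc A f u V q)"
    by (rule Tc_open[where X=X and A=A and D=D and f=f and u=u and Ob=V, OF fo HOV si Ufam_open(1)[OF Uf] assms])
  have n: "Tc A f u V q \<noteq> {}"
    by (rule Tc_ne[where X=X and A=A and D=D and f=f and u=u and Ob=V, OF fo HOV Ufam_open(2)[OF Uf] assms])
  show ?thesis unfolding V'_def using False o n by simp
qed

lemma presc_main: "Ufam X A Z D f u V' \<and> (\<forall>x\<in>X. V' x \<subseteq> V x) \<and> V' y \<subseteq> S"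
proof -
  have sub: "V' x \<subseteq> V x" if "x \<in> X" for x
    using V'_props[OF that] Tc_sub[of A f u V x] by blast
  have vy: "V' y = S" unfolding V'_def by simp
  have edge: "V' x \<subseteq> D (u x) \<and> V' q \<subseteq> f (u x) ` V' x" if xq: "(x,q) \<in> A" for x q
  proof -
    have xX: "x \<in> X" and qX: "q \<in> X" using forest_edge_X[OF fo xq] by blast+
    have E: "Tc A f u V x \<subseteq> D (u x) \<and> Tc A f u V q = f (u x) ` Tc A f u V x"
      by (rule Tc_E[where X=X and A=A and D=D and f=f and u=u and Ob=V, OF fo HOV xq])
    have d: "V' x \<subseteq> D (u x)" using V'_props[OF xX] E by blast
    have "V' q \<subseteq> f (u x) ` V' x"
    proof (cases "(y,x) \<in> A\<^sup>*")
      case True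
      have Tq: "(y,q) \<in> A\<^sup>*" using True xq by (rule rtrancl_into_rtrancl)
      have a: "ht A y - ht A x \<le> ht A y" "x = (nxt A ^^ (ht A y - ht A x)) y"
        using anc[OF True] by blast+
      have hx: "ht A x = Suc (ht A q)" by (rule ht_edge[OF fo xq])
      obtain j where j: "(y,x) \<in> A ^^ j" using True rtrancl_power by blast
      have "ht A y = ht A x + j" by (rule relpow_ht[OF fo j])
      then have hq: "ht A y - ht A q = Suc (ht A y - ht A x)" using hx by linarith
      have "V' q = Ch A f u y S (Suc (ht A y - ht A x))" unfolding V'_def using Tq hq by simp
      also have "\<dots> = f (u ((nxt A ^^ (ht A y - ht A x)) y)) ` Ch A f u y S (ht A y - ht A x)" by simp
      also have "\<dots> = f (u x) ` V' x" unfolding V'_def using True a(2)[symmetric] by simp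
      finally show ?thesis by simp
    next
      case False
      have "V' x = Tc A f u V x" unfolding V'_def using False by simp
      then show ?thesis using V'_props[OF qX] E by simp
    qed
    then show ?thesis using d by blast
  qed
  have "Ufam X A Z D f u V'" unfolding Ufam_def
  proof (intro conjI ballI)
    fix x assume "x \<in> X"
    then show "openin (top_of_set Z) (V' x)" "V' x \<noteq> {}" using V'_props by blast+
  next
    fix p assume "p \<in> A"
    then show "case p of (x, q) \<Rightarrow> V' x \<subseteq> D (u x) \<and> V' q \<subseteq> f (u x) ` V' x"
      using edge by (cases p) simp
  qed
  then show ?thesis using sub vy by blast
qed

end

lemma presc:
  assumes "forest X A" "sit Z D f" "Ufam X A Z D f u V" "y \<in> X" "openin (top_of_set Z) S" "S \<noteq> {}"
    "S \<subseteq> Tc A f u V y"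
  shows "\<exists>V'. Ufam X A Z D f u V' \<and> (\<forall>x\<in>X. V' x \<subseteq> V x) \<and> V' y \<subseteq> S"
  using presc_main[OF assms] by blast



lemma leaf_exists:
  assumes fo: "forest X A" and ne: "X \<noteq> {}"
  obtains l where "l \<in> X" "\<forall>c. (c,l) \<notin> A"
proof -
  have fX: "finite X" using fo unfolding forest_def by blast
  obtain l where l: "l \<in> X" "Max (ht A ` X) = ht A l" by (rule obtains_MAX[OF fX ne])
  have "(c,l) \<notin> A" for c
  proof
    assume cl: "(c,l) \<in> A"
    have "c \<in> X" by (rule forest_edge_X(1)[OF fo cl])
    then have "ht A c \<le> Max (ht A ` X)" using fX by simp
    moreover have "ht A c = Suc (ht A l)" by (rule ht_edge[OF fo cl])
    ultimately show False using l(2) by linarith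
  qed
  then show ?thesis using that l(1) by blast
qed

lemma subforest:
  assumes fo: "forest X A"
  shows "forest (X - {l}) (A \<inter> ((X - {l}) \<times> (X - {l})))"
proof -
  have fu: "functional_rel A" using fo unfolding forest_def by blast
  have "functional_rel (A \<inter> ((X - {l}) \<times> (X - {l})))" using fu unfolding functional_rel_def by blast
  moreover have "(x,x) \<notin> (A \<inter> ((X - {l}) \<times> (X - {l})))\<^sup>+" for x
  proof
    assume "(x,x) \<in> (A \<inter> ((X - {l}) \<times> (X - {l})))\<^sup>+"
    then have "(x,x) \<in> A\<^sup>+" using trancl_mono by blast
    then show False using fo unfolding forest_def by blast
  qed
  moreover have "finite (X - {l})" using fo unfolding forest_def by blast
  ultimately show ?thesis unfolding forest_def by blast
qed

lemma subUfam:
  assumes "Ufam X A Z D f u V" "X' \<subseteq> X" "A' \<subseteq> A"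
  shows "Ufam X' A' Z D f u V"
  using assms unfolding Ufam_def by blast

lemma ext_thread:
  assumes fo: "forest X A" and l: "l \<in> X" and np: "\<forall>c. (c,l) \<notin> A"
    and th: "thread (X - {l}) (A \<inter> ((X - {l}) \<times> (X - {l}))) f u V z"
    and inj: "inj_on z (X - {l})" and av: "z ` (X - {l}) \<inter> F = {}"
    and a: "a \<in> V l" "a \<notin> F" "a \<notin> z ` (X - {l})"
    and ae: "\<And>q. (l,q) \<in> A \<Longrightarrow> f (u l) a = z q"
  shows "thread X A f u V (z(l := a)) \<and> inj_on (z(l := a)) X \<and> (z(l := a)) ` X \<inter> F = {}"
proof -
  have Xi: "X = insert l (X - {l})" using l by blast
  have t1: "(z(l := a)) x \<in> V x" if "x \<in> X" for x
  proof (cases "x = l")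
    case True then show ?thesis using a(1) by simp
  next
    case False then have "x \<in> X - {l}" using that by blast
    then show ?thesis using th False unfolding thread_def by simp
  qed
  have t2: "f (u p) ((z(l := a)) p) = (z(l := a)) q" if pq: "(p,q) \<in> A" for p q
  proof -
    have ql: "q \<noteq> l" using np pq by blast
    show ?thesis
    proof (cases "p = l")
      case True then show ?thesis using ae pq ql by simp
    next
      case False
      have "p \<in> X" "q \<in> X" using forest_edge_X[OF fo pq] by blast+
      then have "(p,q) \<in> A \<inter> ((X - {l}) \<times> (X - {l}))" using pq False ql by blast
      then have "f (u p) (z p) = z q" using th unfolding thread_def by blast
      then show ?thesis using False ql by simp
    qed
  qed
  have ij: "inj_on (z(l := a)) X"
  proof (rule inj_onI)
    fix x x' assume x: "x \<in> X" and x': "x' \<in> X" and e: "(z(l := a)) x = (z(l := a)) x'"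
    show "x = x'"
    proof (cases "x = l"; cases "x' = l")
      assume "x = l" "x' = l" then show ?thesis by simp
    next
      assume "x = l" "x' \<noteq> l"
      then have "a = z x'" "x' \<in> X - {l}" using e x' by auto
      then show ?thesis using a(3) by blast
    next
      assume "x \<noteq> l" "x' = l"
      then have "z x = a" "x \<in> X - {l}" using e x by auto
      then show ?thesis using a(3) by blast
    next
      assume "x \<noteq> l" "x' \<noteq> l"
      then have "z x = z x'" "x \<in> X - {l}" "x' \<in> X - {l}" using e x x' by auto
      then show ?thesis using inj unfolding inj_on_def by blast
    qed
  qed
  have "(z(l := a)) ` X = insert a (z ` (X - {l}))" using l by auto
  then have "(z(l := a)) ` X \<inter> F = {}" using av a(2) by auto
  then show ?thesis using t1 t2 ij unfolding thread_def by blast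
qed

lemma sep_delta:
  fixes B :: "'a::metric_space set"
  assumes "finite B"
  shows "\<exists>\<delta>>0. \<forall>b\<in>B. \<forall>b'\<in>B. b \<noteq> b' \<longrightarrow> 2 * \<delta> \<le> dist b b'"
proof -
  define P where "P = (\<lambda>(b,b'). dist b b') ` {p \<in> B \<times> B. fst p \<noteq> snd p}"
  have fP: "finite P" unfolding P_def using assms by simp
  show ?thesis
  proof (cases "P = {}")
    case True
    then have "\<forall>b\<in>B. \<forall>b'\<in>B. b \<noteq> b' \<longrightarrow> False" unfolding P_def by auto
    then show ?thesis by (intro exI[of _ 1]) auto
  next
    case False
    have pos: "0 < Min P" using fP False unfolding P_def by auto
    have "2 * (Min P / 2) \<le> dist b b'" if "b \<in> B" "b' \<in> B" "b \<noteq> b'" for b b'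
    proof -
      have "dist b b' \<in> P" unfolding P_def using that by force
      then have "Min P \<le> dist b b'" using fP by simp
      then show ?thesis by simp
    qed
    then show ?thesis using pos by (intro exI[of _ "Min P / 2"]) auto
  qed
qed



lemma stepB:
  fixes Z :: "'a::metric_space set" and X :: "'b set"
  assumes si: "sit Z D f" and fo: "forest X A" and l: "l \<in> X" and np: "\<forall>c. (c,l) \<notin> A"
    and ly: "(l,y) \<in> A" and Uf: "Ufam X A Z D f u V" and fF: "finite F"
    and IH: "\<And>V'. Ufam (X - {l}) (A \<inter> ((X - {l}) \<times> (X - {l}))) Z D f u V' \<Longrightarrow>
        \<exists>z. thread (X - {l}) (A \<inter> ((X - {l}) \<times> (X - {l}))) f u V' z \<and> inj_on z (X - {l})
            \<and> z ` (X - {l}) \<inter> F = {}"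
  shows "\<exists>z. thread X A f u V z \<and> inj_on z X \<and> z ` X \<inter> F = {}"
proof -
  let ?X = "X - {l}" and ?A = "A \<inter> ((X - {l}) \<times> (X - {l}))"
  define n0 where "n0 = u l"
  have fo': "forest ?X ?A" by (rule subforest[OF fo])
  have Uf': "Ufam ?X ?A Z D f u V" by (rule subUfam[OF Uf]) auto
  have fu: "functional_rel A" using fo unfolding forest_def by blast
  have yX: "y \<in> X" using forest_edge_X(2)[OF fo ly] .
  have yl: "y \<noteq> l" using ly fo unfolding forest_def by blast
  have yX': "y \<in> ?X" using yX yl by blast
  have HOV': "\<And>x q. (x,q) \<in> ?A \<Longrightarrow> V x \<subseteq> D (u x) \<and> V q \<subseteq> f (u x) ` V x"
    by (rule Ufam_HO[OF Uf'])
  define G where "G = Tc ?A f u V"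
  have Go: "openin (top_of_set Z) (G y)" unfolding G_def
    by (rule Tc_open[where X="?X" and A="?A" and D=D and f=f and u=u and Ob=V, OF fo' HOV' si Ufam_open(1)[OF Uf'] yX'])
  have Gne: "G y \<noteq> {}" unfolding G_def
    by (rule Tc_ne[where X="?X" and A="?A" and D=D and f=f and u=u and Ob=V, OF fo' HOV' Ufam_open(2)[OF Uf'] yX'])
  have GV: "G y \<subseteq> V y" unfolding G_def by (rule Tc_sub)
  have hl: "V l \<subseteq> D n0 \<and> V y \<subseteq> f n0 ` V l" using Ufam_HO[OF Uf ly] unfolding n0_def .
  define Ol where "Ol = {a \<in> V l. f n0 a \<in> G y}"
  have Ol_eq: "Ol = V l \<inter> {a \<in> D n0. f n0 a \<in> G y}" unfolding Ol_def using hl by blast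
  have Olo: "openin (top_of_set Z) Ol" unfolding Ol_eq
    by (rule openin_Int[OF Ufam_open(1)[OF Uf l] sit_pre_open[OF si Go]])
  have OlV: "Ol \<subseteq> V l" unfolding Ol_def by blast
  have OlD: "Ol \<subseteq> D n0" using OlV hl by blast
  have Olne: "Ol \<noteq> {}"
  proof -
    obtain b where "b \<in> G y" using Gne by blast
    then have "b \<in> f n0 ` V l" using GV hl by blast
    then obtain a where "a \<in> V l" "b = f n0 a" by blast
    then have "a \<in> Ol" unfolding Ol_def using \<open>b \<in> G y\<close> by simp
    then show ?thesis by blast
  qed
  obtain w where w: "\<not> countable {a \<in> Ol. f n0 a = w}" using sit_nc[OF si Olo Olne OlD] by blast
  then have "infinite {a \<in> Ol. f n0 a = w}" using countable_finite by blast
  then obtain B where fB: "finite B" and cB: "card B = card X + card F" and BF: "B \<subseteq> {a \<in> Ol. f n0 a = w}"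
    using infinite_arbitrarily_large by blast
  obtain \<delta> where dp: "\<delta> > 0" and dsep: "\<forall>b\<in>B. \<forall>b'\<in>B. b \<noteq> b' \<longrightarrow> 2 * \<delta> \<le> dist b b'"
    using sep_delta[OF fB] by blast
  define N where "N b = Ol \<inter> ball b \<delta>" for b
  have No: "openin (top_of_set Z) (N b)" for b unfolding N_def
    by (rule openin_Int_open[OF Olo open_ball])
  have ND: "N b \<subseteq> D n0" for b unfolding N_def using OlD by blast
  have NfO: "openin (top_of_set Z) (f n0 ` N b)" for b by (rule sit_img_open[OF si No ND])
  define S where "S = G y \<inter> \<Inter> ((\<lambda>b. f n0 ` N b) ` B)"
  have So: "openin (top_of_set Z) S" unfolding S_def
    by (rule openin_Int_Inter) (use fB Go NfO in auto)
  have Xne: "X \<noteq> {}" using l by blast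
  have fX: "finite X" using fo unfolding forest_def by blast
  have "card X > 0" using fX Xne by (simp add: card_gt_0_iff)
  then have "B \<noteq> {}" using cB by auto
  then obtain b0 where b0: "b0 \<in> B" by blast
  have wG: "w \<in> G y" using BF b0 unfolding Ol_def by auto
  have wN: "w \<in> f n0 ` N b" if "b \<in> B" for b
  proof -
    have "b \<in> Ol" "f n0 b = w" using BF that by auto
    moreover have "b \<in> ball b \<delta>" using dp by simp
    ultimately show ?thesis unfolding N_def by blast
  qed
  have wS: "w \<in> S" unfolding S_def using wG wN by blast
  have SG: "S \<subseteq> Tc ?A f u V y" unfolding S_def G_def by blast
  obtain V' where V': "Ufam ?X ?A Z D f u V'" "\<forall>x\<in>?X. V' x \<subseteq> V x" "V' y \<subseteq> S"
    using presc[OF fo' si Uf' yX' So _ SG] wS by blast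
  obtain z where z: "thread ?X ?A f u V' z" "inj_on z ?X" "z ` ?X \<inter> F = {}"
    using IH[OF V'(1)] by blast
  have zth: "thread ?X ?A f u V z" using z(1) V'(2) unfolding thread_def by blast
  have zyS: "z y \<in> S" using z(1) yX' V'(3) unfolding thread_def by blast
  have ex: "\<forall>b\<in>B. \<exists>a. a \<in> N b \<and> f n0 a = z y"
  proof
    fix b assume bB: "b \<in> B"
    have "S \<subseteq> f n0 ` N b" unfolding S_def using bB by blast
    then have "z y \<in> f n0 ` N b" using zyS by (rule subsetD)
    then obtain a where "a \<in> N b" "z y = f n0 a" by (rule imageE)
    then show "\<exists>a. a \<in> N b \<and> f n0 a = z y" by (intro exI[of _ a]) simp
  qed
  then obtain g where gg: "\<forall>b\<in>B. g b \<in> N b \<and> f n0 (g b) = z y" by (rule bchoice[THEN exE])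
  have g: "g b \<in> N b \<and> f n0 (g b) = z y" if "b \<in> B" for b using gg that by (rule bspec)
  have ginj: "inj_on g B"
  proof (rule inj_onI)
    fix b b' assume bb: "b \<in> B" "b' \<in> B" "g b = g b'"
    show "b = b'"
    proof (rule ccontr)
      assume "b \<noteq> b'"
      then have "2 * \<delta> \<le> dist b b'" using dsep bb by blast
      moreover have "dist b (g b) < \<delta>" using g[OF bb(1)] by (simp add: N_def)
      moreover have "dist b' (g b') < \<delta>" using g[OF bb(2)] by (simp add: N_def)
      then have "dist b' (g b) < \<delta>" using bb(3) by simp
      moreover have "dist b b' \<le> dist b (g b) + dist b' (g b)" by (rule dist_triangle2)
      ultimately show False by linarith
    qed
  qed
  have cg: "card (g ` B) = card X + card F" using card_image[OF ginj] cB by simp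
  have cX': "card ?X = card X - 1" using l fX by simp
  have "card (F \<union> z ` ?X) \<le> card F + card ?X"
    by (rule order_trans[OF card_Un_le]) (use card_image_le[of ?X z] fX in simp)
  then have "card (F \<union> z ` ?X) < card (g ` B)" using cg cX' \<open>card X > 0\<close> by linarith
  then have "\<not> g ` B \<subseteq> F \<union> z ` ?X"
    using card_mono[of "F \<union> z ` ?X" "g ` B"] fF fX by (meson finite_UnI finite_imageI finite_Diff not_le)
  then obtain a where aB: "a \<in> g ` B" and aF: "a \<notin> F" and az: "a \<notin> z ` ?X" by blast
  obtain b where b: "b \<in> B" "a = g b" using aB by blast
  have aO: "a \<in> Ol" "f n0 a = z y" using g[OF b(1)] b(2) unfolding N_def by auto
  have ae: "f (u l) a = z q" if "(l,q) \<in> A" for q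
  proof -
    have "q = y" using fu that ly unfolding functional_rel_def by blast
    then show ?thesis using aO(2) n0_def by simp
  qed
  have "thread X A f u V (z(l := a)) \<and> inj_on (z(l := a)) X \<and> (z(l := a)) ` X \<inter> F = {}"
    by (rule ext_thread[OF fo l np zth z(2) z(3)]) (use aO OlV aF az ae in auto)
  then show ?thesis by blast
qed



lemma inj_thread_n:
  fixes Z :: "'a::metric_space set" and u :: "'b \<Rightarrow> nat"
  assumes si: "sit Z D f"
  shows "\<forall>(X::'b set) A V F. card X = n \<longrightarrow> forest X A \<longrightarrow> Ufam X A Z D f u V \<longrightarrow> finite F \<longrightarrow>
     (\<exists>z. thread X A f u V z \<and> inj_on z X \<and> z ` X \<inter> F = {})"
proof (induction n)
  case 0
  show ?case
  proof (intro allI impI)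
    fix X :: "'b set" and A V and F :: "'a set"
    assume c: "card X = 0" and fo: "forest X A" and "Ufam X A Z D f u V" "finite F"
    have "X = {}" using c fo unfolding forest_def by simp
    moreover then have "A = {}" using fo unfolding forest_def by blast
    ultimately have "thread X A f u V (\<lambda>_. undefined) \<and> inj_on (\<lambda>_. undefined) X \<and> (\<lambda>_. undefined) ` X \<inter> F = {}"
      unfolding thread_def by simp
    then show "\<exists>z. thread X A f u V z \<and> inj_on z X \<and> z ` X \<inter> F = {}" by blast
  qed
next
  case (Suc n)
  show ?case
  proof (intro allI impI)
    fix X :: "'b set" and A V and F :: "'a set"
    assume c: "card X = Suc n" and fo: "forest X A" and Uf: "Ufam X A Z D f u V" and fF: "finite F"
    have fX: "finite X" using fo unfolding forest_def by blast
    have "X \<noteq> {}" using c by auto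
    then obtain l where l: "l \<in> X" "\<forall>c. (c,l) \<notin> A" using leaf_exists[OF fo] by blast
    have cX: "card (X - {l}) = n" using c l(1) fX by simp
    have IH: "\<And>V'. Ufam (X - {l}) (A \<inter> ((X - {l}) \<times> (X - {l}))) Z D f u V' \<Longrightarrow>
        \<exists>z. thread (X - {l}) (A \<inter> ((X - {l}) \<times> (X - {l}))) f u V' z \<and> inj_on z (X - {l})
            \<and> z ` (X - {l}) \<inter> F = {}"
      using Suc.IH cX subforest[OF fo] fF by blast
    show "\<exists>z. thread X A f u V z \<and> inj_on z X \<and> z ` X \<inter> F = {}"
    proof (cases "\<exists>y. (l,y) \<in> A")
      case True
      then obtain y where ly: "(l,y) \<in> A" by blast
      show ?thesis by (rule stepB[OF si fo l(1) l(2) ly Uf fF IH])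
    next
      case False
      have Uf': "Ufam (X - {l}) (A \<inter> ((X - {l}) \<times> (X - {l}))) Z D f u V" by (rule subUfam[OF Uf]) auto
      obtain z where z: "thread (X - {l}) (A \<inter> ((X - {l}) \<times> (X - {l}))) f u V z" "inj_on z (X - {l})"
            "z ` (X - {l}) \<inter> F = {}" using IH[OF Uf'] by blast
      have "infinite (V l)" by (rule sit_inf[OF si Ufam_open(1)[OF Uf l(1)] Ufam_open(2)[OF Uf l(1)]])
      then have "infinite (V l - (F \<union> z ` (X - {l})))" using fF fX by (simp add: Diff_infinite_finite)
      then have "V l - (F \<union> z ` (X - {l})) \<noteq> {}" by (rule infinite_imp_nonempty)
      then obtain a where "a \<in> V l - (F \<union> z ` (X - {l}))" by blast
      then have "thread X A f u V (z(l := a)) \<and> inj_on (z(l := a)) X \<and> (z(l := a)) ` X \<inter> F = {}"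
        by (intro ext_thread[OF fo l(1) l(2) z]) (use False in auto)
      then show ?thesis by blast
    qed
  qed
qed

lemma inj_thread:
  fixes Z :: "'a::metric_space set" and X :: "'b set"
  assumes "sit Z D f" "forest X A" "Ufam X A Z D f u V"
  shows "\<exists>z. thread X A f u V z \<and> inj_on z X"
  using inj_thread_n[OF assms(1), of "card X"] assms(2,3) by blast



lemma zd_clopen:
  assumes "(top_of_set Z) dim_le 0" "openin (top_of_set Z) W" "x \<in> W"
  shows "\<exists>C. closedin (top_of_set Z) C \<and> openin (top_of_set Z) C \<and> x \<in> C \<and> C \<subseteq> W"
proof -
  have nb: "neighbourhood_base_of (\<lambda>U. closedin (top_of_set Z) U \<and> openin (top_of_set Z) U) (top_of_set Z)"
    using assms(1) by (rule dimension_le_0_neighbourhood_base_of_clopen[THEN iffD1])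
  have op: "\<forall>S. (closedin (top_of_set Z) S \<and> openin (top_of_set Z) S) \<longrightarrow> openin (top_of_set Z) S"
    by (intro allI impI) (elim conjE)
  have "\<forall>W x. openin (top_of_set Z) W \<and> x \<in> W \<longrightarrow> (\<exists>U. (closedin (top_of_set Z) U \<and> openin (top_of_set Z) U) \<and> x \<in> U \<and> U \<subseteq> W)"
    by (rule open_neighbourhood_base_of[THEN iffD1, OF op nb])
  then have "\<exists>U. (closedin (top_of_set Z) U \<and> openin (top_of_set Z) U) \<and> x \<in> U \<and> U \<subseteq> W"
    using assms(2,3) by (elim allE[of _ W] allE[of _ x]) (elim impE, intro conjI)
  then show ?thesis by (elim exE conjE) (intro exI conjI)
qed

lemma scs_sit:
  fixes Z :: "'a::metric_space set"
  assumes h: "strongly_complex_situation Z D f"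
  shows "sit Z D f" "(top_of_set Z) dim_le 0"
proof -
  note h' = h[unfolded strongly_complex_situation_def]
  show "(top_of_set Z) dim_le 0" using h' by (rule conjunct2[THEN conjunct1])
  have perf: "Z \<subseteq> (top_of_set Z) derived_set_of Z" using h' by (rule conjunct2[THEN conjunct2[THEN conjunct1]])
  have maps: "\<forall>n. clopenin (top_of_set Z) (D n) \<and>
          continuous_map (subtopology (top_of_set Z) (D n)) (top_of_set Z) (f n) \<and>
          open_map (subtopology (top_of_set Z) (D n)) (top_of_set Z) (f n) \<and>
          clopenin (top_of_set Z) (f n ` D n)"
    using h' by (rule conjunct2[THEN conjunct2[THEN conjunct2[THEN conjunct2[THEN conjunct2[THEN conjunct1]]]]])
  have nc: "\<forall>n V. openin (top_of_set Z) V \<and> V \<noteq> {} \<and> V \<subseteq> D n \<longrightarrow>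
            \<not> (\<forall>w. countable ({z\<in>V. f n z = w}))"
    using h' by (rule conjunct2[THEN conjunct2[THEN conjunct2[THEN conjunct2[THEN conjunct2[THEN conjunct2[THEN conjunct2]]]]]])
  have m1: "\<forall>n. openin (top_of_set Z) (D n) \<and> closedin (top_of_set Z) (D n) \<and>
      continuous_map (subtopology (top_of_set Z) (D n)) (top_of_set Z) (f n) \<and>
      open_map (subtopology (top_of_set Z) (D n)) (top_of_set Z) (f n)"
  proof
    fix n
    have "clopenin (top_of_set Z) (D n) \<and>
          continuous_map (subtopology (top_of_set Z) (D n)) (top_of_set Z) (f n) \<and>
          open_map (subtopology (top_of_set Z) (D n)) (top_of_set Z) (f n) \<and>
          clopenin (top_of_set Z) (f n ` D n)" using maps by (rule spec)
    then show "openin (top_of_set Z) (D n) \<and> closedin (top_of_set Z) (D n) \<and>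
      continuous_map (subtopology (top_of_set Z) (D n)) (top_of_set Z) (f n) \<and>
      open_map (subtopology (top_of_set Z) (D n)) (top_of_set Z) (f n)"
      unfolding clopenin_def by (elim conjE) (intro conjI)
  qed
  have inf: "\<forall>S. openin (top_of_set Z) S \<and> S \<noteq> {} \<longrightarrow> infinite S"
  proof (intro allI impI)
    fix S assume S: "openin (top_of_set Z) S \<and> S \<noteq> {}"
    then obtain x where x: "x \<in> S" by blast
    have SZ: "S \<subseteq> Z" using openin_subset[of "top_of_set Z" S] S by simp
    have Hs: "Hausdorff_space (top_of_set Z)" by (rule Hausdorff_space_subtopology) simp
    have "x \<in> (top_of_set Z) derived_set_of Z" using perf x SZ by blast
    then have "x \<in> {x \<in> topspace (top_of_set Z). \<forall>U. x \<in> U \<and> openin (top_of_set Z) U \<longrightarrow> infinite (Z \<inter> U)}"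
      unfolding derived_set_of_infinite_openin[OF Hs] .
    then have "\<forall>U. x \<in> U \<and> openin (top_of_set Z) U \<longrightarrow> infinite (Z \<inter> U)" by simp
    then have "infinite (Z \<inter> S)" using x S by blast
    moreover have "Z \<inter> S = S" using SZ by blast
    ultimately show "infinite S" by simp
  qed
  show "sit Z D f" unfolding sit_def by (intro conjI m1 nc inf)
qed



theorem lemma4p7:
  fixes X :: "'b set" and A :: "('b \<times> 'b) set"
    and Z :: "'a::metric_space set" and D :: "nat \<Rightarrow> 'a set" and f :: "nat \<Rightarrow> 'a \<Rightarrow> 'a"
    and d :: nat and u :: "'b \<Rightarrow> nat" and V :: "'b \<Rightarrow> 'a set"
  assumes "mapping_tuple X A Z D f"
    and "(u, V) \<in> U_T X A Z D f"
  shows "\<exists>W :: 'b \<Rightarrow> 'a set.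
           (u, W) \<in> E_T X A Z D f \<and>
           (\<forall>x\<in>X. W x \<subseteq> V x \<and> clopenin (top_of_set Z) (W x) \<and>
                  (\<forall>p\<in>W x. \<forall>q\<in>W x. dist p q \<le> (1/2) ^ d)) \<and>
           (\<forall>x\<in>X. \<forall>y\<in>X. x \<noteq> y \<longrightarrow> W x \<inter> W y = {})"
proof -
  have mt: "finite X \<and> uogas X A \<and> strongly_complex_situation Z D f"
    using assms(1) unfolding mapping_tuple_def .
  have fX: "finite X" using mt by (rule conjunct1)
  have fo: "forest X A" using uogas_forest[OF fX] mt by blast
  have scs: "strongly_complex_situation Z D f" using mt by blast
  have si: "sit Z D f" by (rule scs_sit(1)[OF scs])
  have zd: "(top_of_set Z) dim_le 0" by (rule scs_sit(2)[OF scs])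
  have Uf: "Ufam X A Z D f u V" using assms(2) unfolding U_T_def Ufam_def by simp
  obtain z where zt: "thread X A f u V z" and zi: "inj_on z X" using inj_thread[OF si fo Uf] by blast
  have zV: "z x \<in> V x" if "x \<in> X" for x using zt that unfolding thread_def by blast
  have ze: "f (u x) (z x) = z y" if "(x,y) \<in> A" for x y using zt that unfolding thread_def by blast
  obtain \<delta> where dp: "\<delta> > 0" and dsep: "\<forall>b\<in>z ` X. \<forall>b'\<in>z ` X. b \<noteq> b' \<longrightarrow> 2 * \<delta> \<le> dist b b'"
    using sep_delta[of "z ` X"] fX by blast
  define \<epsilon> where "\<epsilon> = min \<delta> ((1/2)^d / 2)"
  have ep: "\<epsilon> > 0" unfolding \<epsilon>_def using dp by simp
  have eps1: "\<epsilon> \<le> \<delta>" "2 * \<epsilon> \<le> (1/2)^d" unfolding \<epsilon>_def by linarith+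
  have exP: "\<forall>x\<in>X. \<exists>C. closedin (top_of_set Z) C \<and> openin (top_of_set Z) C \<and> z x \<in> C \<and> C \<subseteq> V x \<inter> ball (z x) \<epsilon>"
  proof
    fix x assume x: "x \<in> X"
    have "openin (top_of_set Z) (V x \<inter> ball (z x) \<epsilon>)"
      by (rule openin_Int_open[OF Ufam_open(1)[OF Uf x] open_ball])
    moreover have "z x \<in> V x \<inter> ball (z x) \<epsilon>" using zV[OF x] ep by simp
    ultimately show "\<exists>C. closedin (top_of_set Z) C \<and> openin (top_of_set Z) C \<and> z x \<in> C \<and> C \<subseteq> V x \<inter> ball (z x) \<epsilon>"
      by (rule zd_clopen[OF zd])
  qed
  then obtain P where P: "\<forall>x\<in>X. closedin (top_of_set Z) (P x) \<and> openin (top_of_set Z) (P x) \<and> z x \<in> P x \<and> P x \<subseteq> V x \<inter> ball (z x) \<epsilon>"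
    by (rule bchoice[THEN exE])
  define PR where "PR Q x C \<longleftrightarrow> closedin (top_of_set Z) C \<and> openin (top_of_set Z) C \<and> z x \<in> C \<and>
      C \<subseteq> Q x \<inter> \<Inter> ((\<lambda>c. f (u c) ` Q c) ` {c. (c,x) \<in> A})" for Q x C
  define stepf where "stepf Q x = (SOME C. PR Q x C)" for Q :: "'b \<Rightarrow> 'a set" and x
  define Of where "Of k = (stepf ^^ k) P" for k
  define Iv where "Iv k \<longleftrightarrow> (\<forall>x\<in>X. closedin (top_of_set Z) (Of k x) \<and> openin (top_of_set Z) (Of k x) \<and> z x \<in> Of k x \<and> Of k x \<subseteq> P x)" for k
  have OfS: "Of (Suc k) = stepf (Of k)" for k unfolding Of_def by simp
  have good: "PR (Of k) x (Of (Suc k) x)" if ik: "Iv k" and x: "x \<in> X" for k x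
  proof -
    let ?U = "Of k x \<inter> \<Inter> ((\<lambda>c. f (u c) ` Of k c) ` {c. (c,x) \<in> A})"
    have fin: "finite ((\<lambda>c. f (u c) ` Of k c) ` {c. (c,x) \<in> A})"
    proof -
      have "{c. (c,x) \<in> A} \<subseteq> X" using fo unfolding forest_def by blast
      then show ?thesis using fX finite_subset by blast
    qed
    have opc: "openin (top_of_set Z) T" if hT: "T \<in> (\<lambda>c. f (u c) ` Of k c) ` {c. (c,x) \<in> A}" for T
    proof -
      obtain c where c: "(c,x) \<in> A" "T = f (u c) ` Of k c" using hT by blast
      have cX: "c \<in> X" by (rule forest_edge_X(1)[OF fo c(1)])
      have oc: "openin (top_of_set Z) (Of k c)" using ik cX unfolding Iv_def by blast
      have "Of k c \<subseteq> P c" using ik cX unfolding Iv_def by blast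
      moreover have "P c \<subseteq> V c" using P cX by blast
      moreover have "V c \<subseteq> D (u c)" using Ufam_HO[OF Uf c(1)] by blast
      ultimately have "Of k c \<subseteq> D (u c)" by blast
      then show ?thesis unfolding c(2) by (rule sit_img_open[OF si oc])
    qed
    have oU: "openin (top_of_set Z) ?U"
      by (rule openin_Int_Inter[OF fin]) (use ik x opc in \<open>auto simp: Iv_def\<close>)
    have zU: "z x \<in> ?U"
    proof -
      have "z x \<in> Of k x" using ik x unfolding Iv_def by blast
      moreover have "z x \<in> f (u c) ` Of k c" if "(c,x) \<in> A" for c
      proof -
        have "c \<in> X" by (rule forest_edge_X(1)[OF fo that])
        then have "z c \<in> Of k c" using ik unfolding Iv_def by blast
        then show ?thesis using ze[OF that] by (metis image_eqI)
      qed
      ultimately show ?thesis by blast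
    qed
    obtain C where "closedin (top_of_set Z) C \<and> openin (top_of_set Z) C \<and> z x \<in> C \<and> C \<subseteq> ?U"
      using zd_clopen[OF zd oU zU] by blast
    then have "PR (Of k) x C" unfolding PR_def by blast
    then have "PR (Of k) x (SOME C. PR (Of k) x C)" by (rule someI)
    then show ?thesis unfolding OfS stepf_def .
  qed
  have invk: "Iv k" for k
  proof (induction k)
    case 0
    show ?case unfolding Iv_def Of_def using P by simp
  next
    case (Suc k)
    show ?case unfolding Iv_def
    proof
      fix x assume x: "x \<in> X"
      have pr: "PR (Of k) x (Of (Suc k) x)" by (rule good[OF Suc x])
      have "Of (Suc k) x \<subseteq> Of k x" using pr unfolding PR_def by blast
      also have "\<dots> \<subseteq> P x" using Suc x unfolding Iv_def by blast
      finally show "closedin (top_of_set Z) (Of (Suc k) x) \<and> openin (top_of_set Z) (Of (Suc k) x) \<and> z x \<in> Of (Suc k) x \<and> Of (Suc k) x \<subseteq> P x"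
        using pr unfolding PR_def by blast
    qed
  qed
  have Ofstep: "Of (Suc k) x \<subseteq> f (u c) ` Of k c" if "(c,x) \<in> A" for k c x
  proof -
    have x: "x \<in> X" by (rule forest_edge_X(2)[OF fo that])
    have "PR (Of k) x (Of (Suc k) x)" by (rule good[OF invk x])
    then show ?thesis unfolding PR_def using that by blast
  qed
  define Om where "Om x = Of (card X - ht A x) x" for x
  have Oinv: "closedin (top_of_set Z) (Om x) \<and> openin (top_of_set Z) (Om x) \<and> z x \<in> Om x \<and> Om x \<subseteq> P x"
    if "x \<in> X" for x using invk that unfolding Iv_def Om_def by blast
  have HO: "Om c \<subseteq> D (u c) \<and> Om x \<subseteq> f (u c) ` Om c" if cx: "(c,x) \<in> A" for c x
  proof -
    have cX: "c \<in> X" by (rule forest_edge_X(1)[OF fo cx])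
    have "Om c \<subseteq> P c" using Oinv[OF cX] by blast
    moreover have "P c \<subseteq> V c" using P cX by blast
    moreover have "V c \<subseteq> D (u c)" using Ufam_HO[OF Uf cx] by blast
    ultimately have d: "Om c \<subseteq> D (u c)" by blast
    have hc: "ht A c = Suc (ht A x)" by (rule ht_edge[OF fo cx])
    have "ht A c < card X" by (rule ht_less[OF fo cX])
    then have "card X - ht A x = Suc (card X - ht A c)" using hc by linarith
    then have "Om x = Of (Suc (card X - ht A c)) x" unfolding Om_def by simp
    also have "\<dots> \<subseteq> f (u c) ` Om c" unfolding Om_def by (rule Ofstep[OF cx])
    finally show ?thesis using d by blast
  qed
  define W where "W = Tc A f u Om"
  have Oo: "\<And>x. x \<in> X \<Longrightarrow> openin (top_of_set Z) (Om x)" using Oinv by blast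
  have Oc: "\<And>x. x \<in> X \<Longrightarrow> closedin (top_of_set Z) (Om x)" using Oinv by blast
  have zO: "thread X A f u Om z" unfolding thread_def using Oinv ze by blast
  have WE: "W x \<subseteq> D (u x) \<and> W y = f (u x) ` W x" if "(x,y) \<in> A" for x y
    unfolding W_def by (rule Tc_E[where X=X and A=A and D=D and f=f and u=u and Ob=Om, OF fo HO that])
  have Wo: "openin (top_of_set Z) (W x)" if "x \<in> X" for x
    unfolding W_def by (rule Tc_open[where X=X and A=A and D=D and f=f and u=u and Ob=Om, OF fo HO si Oo that])
  have Wc: "closedin (top_of_set Z) (W x)" if "x \<in> X" for x
    unfolding W_def by (rule Tc_closed[where X=X and A=A and D=D and f=f and u=u and Ob=Om, OF fo HO si Oc that])
  have Wz: "z x \<in> W x" if "x \<in> X" for x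
    unfolding W_def by (rule Tc_thread[where X=X and A=A and D=D and f=f and u=u and Ob=Om, OF fo HO zO that])
  have WP: "W x \<subseteq> V x \<inter> ball (z x) \<epsilon>" if "x \<in> X" for x
  proof -
    have "W x \<subseteq> Om x" unfolding W_def by (rule Tc_sub)
    then show ?thesis using Oinv[OF that] P that by blast
  qed
  have E: "(u, W) \<in> E_T X A Z D f"
  proof -
    have "(\<forall>x\<in>X. openin (top_of_set Z) (W x) \<and> W x \<noteq> {}) \<and>
      (\<forall>(x, y)\<in>A. W x \<subseteq> D (u x) \<and> W y = f (u x) ` W x)"
      using Wo Wz WE by blast
    then show ?thesis unfolding E_T_def by blast
  qed
  have diam: "dist p q \<le> (1/2)^d" if "x \<in> X" "p \<in> W x" "q \<in> W x" for x p q
  proof -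
    have "dist (z x) p < \<epsilon>" "dist (z x) q < \<epsilon>" using WP[OF that(1)] that(2,3) by auto
    moreover have "dist p q \<le> dist (z x) p + dist (z x) q" by (rule dist_triangle3)
    ultimately show ?thesis using eps1 by linarith
  qed
  have disj: "W x \<inter> W y = {}" if "x \<in> X" "y \<in> X" "x \<noteq> y" for x y
  proof (rule ccontr)
    assume "W x \<inter> W y \<noteq> {}"
    then obtain p where p: "p \<in> W x" "p \<in> W y" by blast
    have "z x \<noteq> z y" using zi that unfolding inj_on_def by blast
    then have "2 * \<delta> \<le> dist (z x) (z y)" using dsep that by blast
    moreover have "dist (z x) p < \<epsilon>" using WP[OF that(1)] p(1) by auto
    moreover have "dist (z y) p < \<epsilon>" using WP[OF that(2)] p(2) by auto
    moreover have "dist (z x) (z y) \<le> dist (z x) p + dist (z y) p" by (rule dist_triangle2)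
    ultimately show False using eps1 by linarith
  qed
  have "\<forall>x\<in>X. W x \<subseteq> V x \<and> clopenin (top_of_set Z) (W x) \<and> (\<forall>p\<in>W x. \<forall>q\<in>W x. dist p q \<le> (1/2) ^ d)"
    unfolding clopenin_def using WP Wo Wc diam by blast
  then show ?thesis using E disj by blast
qed


end
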